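(* Let $N,k,d$ be integers with $N>k\geq 1$ and $d\geq 1$, and let $j$ be any non-negative integer. Define the rational number \[ w(\sigma_{(N-k)d+j-1}(\mathcal{O}_{h^{N-2-j}})\mathcal{O}_{h^{0}})_{0,2}:=\frac{1}{(2 \pi \sqrt{-1})^{d+1}} \oint_{C_{0}} \frac{dz_{0}}{(z_{0})^{N}} \oint_{C_{1}} \frac{dz_{1}}{(z_{1})^{N}} \cdots \oint_{C_{d}} \frac{dz_{d}}{(z_{d})^{N}}\,(z_{0})^{N-2-j} (z_{1} - z_{0})^{(N-k)d+j-1} \Bigl(\prod_{l=1}^{d} e^{k}(z_{l-1},z_{l}) \Bigr)\prod_{l=1}^{d-1} \frac{1}{kz_{l} (2z_{l} - z_{l-1} - z_{l+1})}, \] where $e^{k}(z,w)=\prod_{i=0}^{k}(iz+(k-i)w)$. Then \[ \frac{1}{k}\,w(\sigma_{(N-k)d+j-1}(\mathcal{O}_{h^{N-2-j}})\mathcal{O}_{h^{0}})_{0,2}=\frac{1}{j!}\frac{\partial^{j}}{\partial \varepsilon^{j}}\left.\left(\frac{\prod_{r=1}^{kd}(r+k\varepsilon)}{\prod_{r=1}^{d}(r+\varepsilon)^N}\right) \right|_{\varepsilon=0}. \]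
   Context: In the residue integral, the operation $\frac{1}{2 \pi \sqrt{-1}} \oint_{C_{i}} dz_{i}$ means taking residues at $z_{i} = 0$ for $i = 0$ and $i=d$, and taking (the sum of) residues at $z_{i} = 0$ and $z_i=\frac{z_{i-1} + z_{i+1}}{2}$ for $i = 1 , \ldots , d-1$. The residue integrals are taken in ascending order with respect to the subscript of the $z_{i}$'s (i.e. from left to right as written: first $z_0$, then $z_1$, ..., finally $z_d$). An empty product (e.g. $\prod_{l=1}^{d-1}$ when $d=1$) equals $1$. The symbol $w(\sigma_{(N-k)d+j-1}(\mathcal{O}_{h^{N-2-j}})\mathcal{O}_{h^{0}})_{0,2}$ is just a name for the number defined by this residue integral (for $0\le j\le N-2$ it is an intersection number on the moduli space of quasimaps from $CP^1$ with two marked points to $CP^{N-1}$ of degree $d$). *)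

theory Defs
  imports "HOL-Complex_Analysis.Complex_Analysis"
begin

definition ek :: "nat \<Rightarrow> complex \<Rightarrow> complex \<Rightarrow> complex" where
  "ek k z w = (\<Prod>i=0..k. of_nat i * z + of_nat (k - i) * w)"

text \<open>The factor z_0^(N-2-j) / z_0^N is written as z_0 powi (-2-j), which is
  meaningful also when j > N-2.\<close>
definition integrand :: "nat \<Rightarrow> nat \<Rightarrow> nat \<Rightarrow> nat \<Rightarrow> (nat \<Rightarrow> complex) \<Rightarrow> complex" where
  "integrand N k d j z =
     z 0 powi (- 2 - int j) / (\<Prod>i=1..d. z i ^ N)
     * (z 1 - z 0) ^ ((N - k) * d + j - 1)
     * (\<Prod>l=1..d. ek k (z (l - 1)) (z l))
     * (\<Prod>l=1..d-1. inverse (of_nat k * z l * (2 * z l - z (l - 1) - z (l + 1))))"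

text \<open>Branches of the iterated residue: a choice list records, for the
  variables z_1,...,z_i already integrated (most recent first), whether the
  residue was taken at 0 (False) or at the "midpoint" pole (True).
  If z_{i-1} was resolved to c * z_i, the pole z_i = (z_{i-1}+z_{i+1})/2 is
  located at z_i = z_{i+1}/(2-c).  mid_coeff gives the coefficient c for
  the most recently integrated variable (z_0 is always resolved at 0).\<close>
fun mid_coeff :: "bool list \<Rightarrow> complex" where
  "mid_coeff [] = 0"
| "mid_coeff (b # bs) = (if b then 1 / (2 - mid_coeff bs) else 0)"

text \<open>branch_res F bs: the function of the remaining variables obtained from
  F by taking the residue in z_0 at 0, and then successively in z_1, ..., z_i
  (i = length bs) according to the choices bs (most recent first).\<close>
fun branch_res :: "((nat \<Rightarrow> complex) \<Rightarrow> complex) \<Rightarrow> bool list \<Rightarrow> (nat \<Rightarrow> complex) \<Rightarrow> complex" where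
  "branch_res F [] = (\<lambda>z. residue (\<lambda>w. F (z(0 := w))) 0)"
| "branch_res F (b # bs) =
     (\<lambda>z. residue (\<lambda>w. branch_res F bs (z(Suc (length bs) := w)))
            (if b then z (Suc (Suc (length bs))) / (2 - mid_coeff bs) else 0))"

text \<open>The full iterated residue: residue in z_0 at 0, in z_i (1 <= i <= d-1)
  at 0 and at (z_{i-1}+z_{i+1})/2 (summed over all branches), and finally in
  z_d at 0.  The result no longer depends on z; we evaluate at z = 0.\<close>
definition iter_res :: "nat \<Rightarrow> ((nat \<Rightarrow> complex) \<Rightarrow> complex) \<Rightarrow> complex" where
  "iter_res d F = (\<Sum>bs\<in>{bs. length bs = d - 1}.
      residue (\<lambda>w. branch_res F bs ((\<lambda>_. 0)(d := w))) 0)"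

definition w_number :: "nat \<Rightarrow> nat \<Rightarrow> nat \<Rightarrow> nat \<Rightarrow> complex" where
  "w_number N k d j = iter_res d (integrand N k d j)"

end

theory Submission
  imports Defs
begin


lemma fps_pow_nth_small:
  fixes DD :: "'a::idom fps"
  assumes "DD $ 0 = 0" "m < n"
  shows "(DD ^ n) $ m = 0"
  using startsby_zero_power_prefix[OF assms(1)] assms(2) by blast

lemma fps_mult_pow_small:
  fixes DD W :: "'a::idom fps"
  assumes "DD $ 0 = 0" "m < n"
  shows "(W * DD ^ n) $ m = 0"
  unfolding fps_mult_nth
proof (rule sum.neutral, intro ballI)
  fix i assume "i \<in> {0..m}"
  then have "m - i < n" using assms(2) by auto
  then show "W $ i * (DD ^ n) $ (m - i) = 0" using fps_pow_nth_small[OF assms(1), of "m-i" n] by simp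
qed

lemma fps_telescope:
  fixes DD :: "complex fps"
  assumes "D \<noteq> 0"
  shows "(fps_const D - DD) * (\<Sum>n\<le>j. DD^n * fps_const (inverse D ^ (n+1)))
         = 1 - DD^(j+1) * fps_const (inverse D ^ (j+1))"
proof (induction j)
  case 0
  then show ?case using assms
    by (simp add: algebra_simps fps_const_mult[symmetric] del: fps_const_mult)
next
  case (Suc j)
  have "(fps_const D - DD) * (\<Sum>n\<le>Suc j. DD^n * fps_const (inverse D ^ (n+1)))
     = (1 - DD^(j+1) * fps_const (inverse D ^ (j+1))) + (fps_const D - DD) * (DD^(Suc j) * fps_const (inverse D ^ (Suc j+1)))"
    using Suc by (simp add: distrib_left)
  also have "\<dots> = 1 - DD^(Suc j+1) * fps_const (inverse D ^ (Suc j+1))"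
  proof -
    have "fps_const D * fps_const (inverse D ^ (Suc j + 1)) = fps_const (inverse D ^ (j+1))"
      using assms by (simp add: fps_const_mult[symmetric] del: fps_const_mult)
    then show ?thesis by (simp add: algebra_simps)
  qed
  finally show ?case .
qed

lemma fps_inv_coeff:
  fixes LL DD :: "complex fps"
  assumes "D \<noteq> 0" "DD $ 0 = 0"
  shows "(LL * inverse (fps_const D - DD)) $ j = (\<Sum>n\<le>j. (LL * DD^n) $ j / D^(n+1))"
proof -
  define V where "V = fps_const D - DD"
  define S where "S = (\<Sum>n\<le>j. DD^n * fps_const (inverse D ^ (n+1)))"
  define R where "R = DD^(j+1) * fps_const (inverse D ^ (j+1))"
  have V0: "V $ 0 \<noteq> 0" using assms by (simp add: V_def)
  have VI: "V * inverse V = 1" using V0 by (simp add: inverse_mult_eq_1')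
  have tel: "V * S = 1 - R"
    unfolding V_def S_def R_def by (rule fps_telescope[OF assms(1)])
  have "inverse V = (V * S + R) * inverse V"
    using tel by simp
  also have "\<dots> = S * (V * inverse V) + R * inverse V"
    by algebra
  finally have eq: "inverse V = S + (inverse V * fps_const (inverse D ^ (j+1))) * DD^(j+1)"
    using VI unfolding R_def by (simp add: mult.commute mult.left_commute)
  have "(LL * inverse V) $ j = (LL * S) $ j + ((LL * (inverse V * fps_const (inverse D ^ (j+1)))) * DD^(j+1)) $ j"
    by (subst eq) (simp only: distrib_left fps_add_nth mult.assoc)
  also have "((LL * (inverse V * fps_const (inverse D ^ (j+1)))) * DD^(j+1)) $ j = 0"
    by (rule fps_mult_pow_small) (use assms in auto)
  also have "(LL * S) $ j = (\<Sum>n\<le>j. (LL * DD^n) $ j / D^(n+1))"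
    unfolding S_def sum_distrib_left fps_sum_nth
    by (intro sum.cong refl) (simp only: mult.assoc[symmetric] fps_mult_right_const_nth power_inverse divide_inverse)
  finally show ?thesis by (simp add: V_def)
qed


lemma fps_compose_coeff:
  fixes LL BB AA :: "complex fps"
  assumes "AA $ 0 = 0"
  shows "(LL * fps_compose BB AA) $ j = (\<Sum>n\<le>j. BB $ n * (LL * AA^n) $ j)"
proof -
  define X where "X = (\<Sum>n\<le>j. fps_const (BB$n) * AA^n)"
  have 1: "fps_compose BB AA $ m = X $ m" if "m \<le> j" for m
  proof -
    have "X $ m = (\<Sum>n\<le>j. BB$n * (AA^n) $ m)"
      unfolding X_def fps_sum_nth by simp
    also have "\<dots> = (\<Sum>n\<in>{0..m}. BB$n * (AA^n) $ m)"
    proof (rule sum.mono_neutral_right)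
      show "finite {..j}" by simp
      show "{0..m} \<subseteq> {..j}" using that by auto
      show "\<forall>i\<in>{..j} - {0..m}. BB $ i * AA ^ i $ m = 0"
        using fps_pow_nth_small[OF assms] by auto
    qed
    finally show ?thesis by (simp add: fps_compose_nth)
  qed
  have "(LL * fps_compose BB AA) $ j = (LL * X) $ j"
    unfolding fps_mult_nth by (intro sum.cong refl) (simp add: 1)
  also have "\<dots> = (\<Sum>n\<le>j. BB $ n * (LL * AA^n) $ j)"
    unfolding X_def sum_distrib_left fps_sum_nth
    by (intro sum.cong refl) (simp only: mult.left_commute[of LL] fps_mult_left_const_nth)
  finally show ?thesis .
qed


lemma powi_neg_nat: "(x::complex) powi (- int m) = inverse (x ^ m)"
  by (simp add: power_int_minus)

lemma fls_sum_nth': "finite A \<Longrightarrow> fls_nth (\<Sum>x\<in>A. f x) n = (\<Sum>x\<in>A. fls_nth (f x) n)"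
  by (induction A rule: finite_induct) auto

lemma residue_step:
  fixes Bf Phi :: "complex \<Rightarrow> complex" and a :: "nat \<Rightarrow> complex" and p :: complex
  assumes Ban: "Bf analytic_on {p}"
  and ev: "eventually (\<lambda>w. Phi w = Bf w * (\<Sum>n\<le>j. a n / (w - p)^(n+1))) (at p)"
  shows "residue Phi p = (\<Sum>n\<le>j. a n * (fps_expansion Bf p) $ n)"
proof -
  define BB where "BB = fps_expansion Bf p"
  have e1: "(\<lambda>x. Bf (p + x)) has_fps_expansion BB"
    unfolding BB_def by (rule analytic_at_imp_has_fps_expansion[OF Ban])
  have e2: "(\<lambda>x. \<Sum>n\<le>j. a n * (Bf (p + x) * x powi (-int (n+1)))) has_laurent_expansion
            (\<Sum>n\<le>j. fls_const (a n) * fls_shift (int (n+1)) (fps_to_fls BB))"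
    by (intro laurent_expansion_intros has_laurent_expansion_fps[OF e1])
  have ev2: "eventually (\<lambda>w. Phi w = (\<Sum>n\<le>j. a n * (Bf w * (w - p) powi (-int (n+1))))) (at p)"
    using ev
  proof eventually_elim
    case (elim w)
    then show ?case
      unfolding powi_neg_nat by (simp add: sum_distrib_left divide_inverse mult_ac)
  qed
  have "residue Phi p = residue (\<lambda>w. \<Sum>n\<le>j. a n * (Bf w * (w - p) powi (-int (n+1)))) p"
    by (rule residue_cong[OF ev2 refl])
  also have "\<dots> = fls_residue (\<Sum>n\<le>j. fls_const (a n) * fls_shift (int (n+1)) (fps_to_fls BB))"
    by (rule has_laurent_expansion_residue) (use e2 in simp)
  also have "\<dots> = (\<Sum>n\<le>j. a n * BB $ n)"
    by (simp add: fls_sum_nth')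
  finally show ?thesis by (simp add: BB_def)
qed


lemma coeff_cpow:
  fixes LL AA :: "complex fps"
  shows "(LL * (fps_const c * AA)^n) $ j = c^n * (LL * AA^n) $ j"
proof -
  have eq: "LL * (fps_const c * AA)^n = fps_const (c^n) * (LL * AA^n)"
    by (simp add: power_mult_distrib mult_ac)
  show ?thesis by (subst eq) (rule fps_mult_left_const_nth)
qed

lemma coeff_cmid:
  fixes LL X :: "complex fps"
  shows "(LL * fps_const B * X) $ j = B * (LL * X) $ j"
proof -
  have eq: "LL * fps_const B * X = fps_const B * (LL * X)"
    by (simp add: mult_ac)
  show ?thesis by (subst eq) (rule fps_mult_left_const_nth)
qed

lemma comp_expansion:
  fixes Lf al Bf :: "complex \<Rightarrow> complex" and LL AA :: "complex fps"
  assumes L: "Lf has_fps_expansion LL" and A: "(\<lambda>e. al e - p0) has_fps_expansion AA"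
    and A0: "AA $ 0 = 0" and Ban: "Bf analytic_on {p0*c}"
  shows "(\<lambda>e. Lf e * Bf (al e * c)) has_fps_expansion
           LL * fps_compose (fps_expansion Bf (p0*c)) (fps_const c * AA)"
proof -
  have e1: "(\<lambda>x. Bf (p0*c + x)) has_fps_expansion fps_expansion Bf (p0*c)"
    by (rule analytic_at_imp_has_fps_expansion[OF Ban])
  have e2: "(\<lambda>e. c * (al e - p0)) has_fps_expansion fps_const c * AA"
    by (intro fps_expansion_intros A)
  have e3: "((\<lambda>x. Bf (p0*c + x)) \<circ> (\<lambda>e. c * (al e - p0))) has_fps_expansion
             fps_compose (fps_expansion Bf (p0*c)) (fps_const c * AA)"
    by (rule has_fps_expansion_compose[OF e1 e2]) (simp add: A0)
  have eq: "((\<lambda>x. Bf (p0*c + x)) \<circ> (\<lambda>e. c * (al e - p0))) = (\<lambda>e. Bf (al e * c))"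
    by (auto simp: algebra_simps)
  show ?thesis
    using has_fps_expansion_mult[OF L e3] unfolding eq .
qed

lemma step_full:
  fixes Lf al Bf Phi :: "complex \<Rightarrow> complex" and LL AA :: "complex fps"
  assumes L: "Lf has_fps_expansion LL" and A: "(\<lambda>e. al e - p0) has_fps_expansion AA"
    and A0: "AA $ 0 = 0" and Ban: "Bf analytic_on {p0*c}"
    and ev: "eventually (\<lambda>w. Phi w = Bf w * (\<Sum>n\<le>j. (LL * AA^n) $ j * c^n / (w - p0*c)^(n+1))) (at (p0*c))"
  shows "residue Phi (p0*c) = (deriv^^j) (\<lambda>e. Lf e * Bf (al e * c)) 0 / fact j"
proof -
  have "residue Phi (p0*c) = (\<Sum>n\<le>j. (LL * AA^n) $ j * c^n * (fps_expansion Bf (p0*c)) $ n)"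
    by (rule residue_step[OF Ban ev])
  also have "\<dots> = (LL * fps_compose (fps_expansion Bf (p0*c)) (fps_const c * AA)) $ j"
  proof -
    have "(LL * fps_compose (fps_expansion Bf (p0*c)) (fps_const c * AA)) $ j =
      (\<Sum>n\<le>j. (fps_expansion Bf (p0*c)) $ n * (LL * (fps_const c * AA)^n) $ j)"
      by (rule fps_compose_coeff) (simp add: A0)
    then show ?thesis unfolding coeff_cpow by (simp add: mult_ac)
  qed
  also have "\<dots> = (deriv^^j) (\<lambda>e. Lf e * Bf (al e * c)) 0 / fact j"
    by (rule fps_nth_fps_expansion[OF comp_expansion[OF L A A0 Ban]])
  finally show ?thesis .
qed

lemma rep_from_fun:
  fixes Lf al H :: "complex \<Rightarrow> complex" and LL AA :: "complex fps"
  assumes L: "Lf has_fps_expansion LL" and A: "(\<lambda>e. al e - p0) has_fps_expansion AA"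
    and A0: "AA $ 0 = 0" and nz: "x - p0*c \<noteq> 0"
    and ev: "eventually (\<lambda>e. H e = Lf e * B * inverse (x - al e * c)) (nhds 0)"
  shows "(deriv^^j) H 0 / fact j = B * (\<Sum>n\<le>j. (LL * AA^n) $ j * c^n / (x - p0*c)^(n+1))"
proof -
  have e1: "(\<lambda>e. (x - p0*c) - c * (al e - p0)) has_fps_expansion fps_const (x - p0*c) - fps_const c * AA"
    by (intro fps_expansion_intros A)
  have e2: "(\<lambda>e. Lf e * B * inverse ((x - p0*c) - c * (al e - p0))) has_fps_expansion
         LL * fps_const B * inverse (fps_const (x - p0*c) - fps_const c * AA)"
    by (intro fps_expansion_intros L e1) (use nz A0 in simp)
  have eq: "(\<lambda>e. Lf e * B * inverse ((x - p0*c) - c * (al e - p0))) = (\<lambda>e. Lf e * B * inverse (x - al e * c))"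
    by (auto simp: algebra_simps)
  have "(deriv^^j) H 0 = (deriv^^j) (\<lambda>e. Lf e * B * inverse (x - al e * c)) 0"
    by (rule higher_deriv_cong_ev[OF ev refl])
  also have "\<dots> / fact j = (LL * fps_const B * inverse (fps_const (x - p0*c) - fps_const c * AA)) $ j"
    using fps_nth_fps_expansion[OF e2[unfolded eq]] by simp
  also have "\<dots> = (\<Sum>n\<le>j. ((LL * fps_const B) * (fps_const c * AA)^n) $ j / (x - p0*c)^(n+1))"
    by (rule fps_inv_coeff) (use nz A0 in auto)
  also have "\<dots> = B * (\<Sum>n\<le>j. (LL * AA^n) $ j * c^n / (x - p0*c)^(n+1))"
    unfolding sum_distrib_left coeff_cmid coeff_cpow
    by (intro sum.cong refl) (simp add: mult_ac)
  finally show ?thesis .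
qed

lemma zero_step:
  fixes Bf Phi :: "complex \<Rightarrow> complex" and a :: "nat \<Rightarrow> complex"
  assumes Ban: "Bf analytic_on {0}" and q: "q \<noteq> 0"
    and ev: "eventually (\<lambda>w. Phi w = Bf w * (\<Sum>n\<le>j. a n / (w - q)^(n+1))) (at 0)"
  shows "residue Phi 0 = 0"
proof -
  have an: "(\<lambda>w. Bf w * (\<Sum>n\<le>j. a n / (w - q)^(n+1))) analytic_on {0}"
    by (intro analytic_intros Ban) (use q in auto)
  then obtain S where S: "open S" "0 \<in> S" "(\<lambda>w. Bf w * (\<Sum>n\<le>j. a n / (w - q)^(n+1))) holomorphic_on S"
    using analytic_at by blast
  have "residue Phi 0 = residue (\<lambda>w. Bf w * (\<Sum>n\<le>j. a n / (w - q)^(n+1))) 0"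
    by (rule residue_cong[OF ev refl])
  also have "\<dots> = 0" by (rule residue_holo[OF S])
  finally show ?thesis .
qed


lemma higher_deriv_real:
  fixes fC :: "complex \<Rightarrow> complex" and fR :: "real \<Rightarrow> real"
  assumes holo: "fC holomorphic_on ball 0 r" and eq: "\<And>x. \<bar>x\<bar> < r \<Longrightarrow> fC (of_real x) = of_real (fR x)"
  shows "\<bar>x\<bar> < r \<Longrightarrow> (deriv^^n) fC (of_real x) = of_real ((deriv^^n) fR x)"
proof (induction n arbitrary: x)
  case 0
  then show ?case using eq by simp
next
  case (Suc n)
  define g where "g = (deriv^^n) fC"
  define h where "h = (deriv^^n) fR"
  have gh: "g holomorphic_on ball 0 r" unfolding g_def by (rule holomorphic_higher_deriv[OF holo]) simp
  have xin: "of_real x \<in> ball (0::complex) r" using Suc.prems by simp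
  define D where "D = deriv g (of_real x)"
  have "(g has_field_derivative D) (at (of_real x))"
    unfolding D_def by (rule holomorphic_derivI[OF gh open_ball xin])
  then have V: "((\<lambda>t. g (of_real t)) has_vector_derivative D) (at x)"
    by (rule has_vector_derivative_real_field)
  have V': "((\<lambda>t. of_real (h t)) has_vector_derivative D) (at x)"
  proof (rule has_vector_derivative_transform_within_open[OF V])
    show "open {-r<..<r}" by simp
    show "x \<in> {-r<..<r}" using Suc.prems by auto
    fix t :: real assume "t \<in> {-r<..<r}"
    then have "\<bar>t\<bar> < r" by auto
    then show "g (of_real t) = of_real (h t)" unfolding g_def h_def by (rule Suc.IH)
  qed
  have Re: "((\<lambda>t. Re (of_real (h t))) has_vector_derivative Re D) (at x)"
    using bounded_linear.has_vector_derivative[OF bounded_linear_Re V'] by simp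
  have Im: "((\<lambda>t. Im (of_real (h t))) has_vector_derivative Im D) (at x)"
    using bounded_linear.has_vector_derivative[OF bounded_linear_Im V'] by simp
  have Im0: "Im D = 0"
  proof -
    have "((\<lambda>t. 0::real) has_vector_derivative Im D) (at x)" using Im by simp
    moreover have "((\<lambda>t. 0::real) has_vector_derivative 0) (at x)" by (rule has_vector_derivative_const)
    ultimately show ?thesis by (rule vector_derivative_unique_at)
  qed
  have "(h has_real_derivative Re D) (at x)"
    using Re by (simp add: has_real_derivative_iff_has_vector_derivative)
  then have dh: "deriv h x = Re D" by (rule DERIV_imp_deriv)
  have "D = of_real (Re D)" using Im0 by (simp add: complex_eq_iff)
  moreover have "(deriv^^Suc n) fC (of_real x) = D" by (simp add: D_def g_def)
  moreover have "(deriv^^Suc n) fR x = Re D" using dh by (simp add: h_def)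
  ultimately show ?case by simp
qed



definition pp :: "nat \<Rightarrow> complex" where "pp i = of_nat i / of_nat (Suc i)"
definition aa :: "nat \<Rightarrow> complex \<Rightarrow> complex" where "aa i e = (of_nat i + e) / (of_nat (Suc i) + e)"
definition ekr :: "nat \<Rightarrow> complex \<Rightarrow> complex \<Rightarrow> complex" where
  "ekr k x y = of_nat k ^ 2 * y * (\<Prod>r=1..k-1. of_nat r * x + of_nat (k - r) * y)"

lemma ofnat_Suc_nz: "(of_nat (Suc i) :: complex) \<noteq> 0"
  by (simp only: of_nat_eq_0_iff)

lemma two_minus_pp: "2 - pp i = of_nat (Suc (Suc i)) / of_nat (Suc i)"
proof -
  have h: "(of_nat (Suc i) :: complex) \<noteq> 0" by (rule ofnat_Suc_nz)
  show ?thesis unfolding pp_def using h by (simp add: field_simps del: of_nat_Suc) (simp add: algebra_simps)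
qed

lemma mid_coeff_rep: "mid_coeff (replicate i True) = pp i"
proof (induction i)
  case 0 then show ?case by (simp add: pp_def)
next
  case (Suc i)
  have "mid_coeff (replicate (Suc i) True) = 1 / (2 - pp i)" using Suc by simp
  also have "\<dots> = pp (Suc i)" unfolding two_minus_pp by (simp add: pp_def)
  finally show ?case .
qed


lemma ek_split: "1 \<le> k \<Longrightarrow> ek k x y = x * ekr k x y"
proof -
  assume k: "1 \<le> k"
  then obtain k' where k': "k = Suc k'" by (cases k) auto
  define g where "g = (\<lambda>i. of_nat i * x + of_nat (k - i) * y)"
  have "ek k x y = prod g {0..k}" unfolding ek_def g_def ..
  also have "\<dots> = g 0 * prod g {1..k}" by (simp add: prod.atLeast_Suc_atMost)
  also have "prod g {1..k} = prod g {1..k'} * g k" unfolding k' by (simp add: prod.cl_ivl_Suc)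
  finally have "ek k x y = g 0 * (prod g {1..k'} * g k)" .
  moreover have "g 0 = of_nat k * y" "g k = of_nat k * x" by (simp_all add: g_def)
  moreover have "ekr k x y = of_nat k ^ 2 * y * prod g {1..k'}" unfolding ekr_def g_def k' by simp
  ultimately show ?thesis by (simp add: power2_eq_square mult_ac)
qed

lemma ekr_hom: "1 \<le> k \<Longrightarrow> ekr k (a * y) y = y ^ k * ekr k a 1"
proof -
  assume k: "1 \<le> k"
  then obtain k' where k': "k = Suc k'" by (cases k) auto
  have "(\<Prod>r=1..k-1. of_nat r * (a * y) + of_nat (k - r) * y) = (\<Prod>r=1..k'. y * (of_nat r * a + of_nat (k - r)))"
    unfolding k' by (rule prod.cong) (auto simp: algebra_simps)
  also have "\<dots> = y ^ k' * (\<Prod>r=1..k'. of_nat r * a + of_nat (k - r))"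
    by (simp add: prod.distrib)
  finally have eq: "(\<Prod>r=1..k-1. of_nat r * (a * y) + of_nat (k - r) * y) = y ^ k' * (\<Prod>r=1..k'. of_nat r * a + of_nat (k - r))" .
  show ?thesis unfolding ekr_def eq unfolding k' by (simp add: mult_ac)
qed


lemma aa_analytic: "(aa i) analytic_on {0}"
  unfolding aa_def[abs_def] by (intro analytic_intros) (use ofnat_Suc_nz in auto)


locale wsetup =
  fixes N k d j :: nat
  assumes kN: "k < N" and k1: "1 \<le> k" and d1: "1 \<le> d"
begin

definition ee :: "nat \<Rightarrow> nat" where "ee i = (N - k) * (d - i) - 1"
definition theta :: "nat \<Rightarrow> complex \<Rightarrow> complex \<Rightarrow> complex" where
  "theta i x y = (if i = 0 then (y - x) ^ ee 0 else x ^ ee i)"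
definition thetac :: "nat \<Rightarrow> complex \<Rightarrow> complex" where
  "thetac i a = (if i = 0 then (1 - a) ^ ee 0 else a ^ ee i)"
definition Dfac :: "(nat \<Rightarrow> complex) \<Rightarrow> nat \<Rightarrow> complex" where
  "Dfac z l = inverse (of_nat k * z l * (2 * z l - z (l - 1) - z (l + 1)))"
definition Tail :: "nat \<Rightarrow> (nat \<Rightarrow> complex) \<Rightarrow> complex" where
  "Tail i z = inverse (\<Prod>l=i+1..d. z l ^ N) * (\<Prod>l=i+2..d. ek k (z (l - 1)) (z l)) * (\<Prod>l=i+2..d-1. Dfac z l)"
definition BB :: "nat \<Rightarrow> (nat \<Rightarrow> complex) \<Rightarrow> complex" where
  "BB i z = theta i (z i) (z (i+1)) * ekr k (z i) (z (i+1)) * (if i + 1 < d then Dfac z (i+1) else 1) * Tail i z"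
primrec Lf :: "nat \<Rightarrow> complex \<Rightarrow> complex" where
  "Lf 0 e = 1 / (1 + e)"
| "Lf (Suc i) e = Lf i e * thetac i (aa i e) * ekr k (aa i e) 1 * aa (Suc i) e / of_nat k"
definition Kf :: "complex \<Rightarrow> complex" where
  "Kf e = Lf (d-1) e * thetac (d-1) (aa (d-1) e) * ekr k (aa (d-1) e) 1"
definition LLs :: "nat \<Rightarrow> complex fps" where "LLs i = fps_expansion (Lf i) 0"
definition AAs :: "nat \<Rightarrow> complex fps" where "AAs i = fps_expansion (\<lambda>e. aa i e - pp i) 0"
definition gam :: "nat \<Rightarrow> nat \<Rightarrow> complex" where "gam i n = (LLs i * AAs i ^ n) $ j"
definition Rep :: "nat \<Rightarrow> (nat \<Rightarrow> complex) \<Rightarrow> complex" where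
  "Rep i z = BB i z * (\<Sum>n\<le>j. gam i n * z (i+1) ^ n / (z i - pp i * z (i+1)) ^ (n+1))"
abbreviation FF where "FF \<equiv> integrand N k d j"
definition Phi :: "nat \<Rightarrow> (nat \<Rightarrow> complex) \<Rightarrow> complex" where
  "Phi i = (if i = 0 then FF else branch_res FF (replicate (i-1) True))"

lemma Phi_Suc: "Phi (Suc i) z = residue (\<lambda>w. Phi i (z(i := w))) (pp i * z (Suc i))"
proof (cases i)
  case 0
  then show ?thesis by (simp add: Phi_def pp_def)
next
  case (Suc i')
  have pt: "z (Suc (Suc i')) / (2 - pp i') = pp (Suc i') * z (Suc (Suc i'))"
    unfolding two_minus_pp pp_def by (simp add: field_simps del: of_nat_Suc) (simp add: algebra_simps)
  show ?thesis using Suc by (simp add: Phi_def mid_coeff_rep pt)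
qed

lemma ekr_analytic [analytic_intros]: "f analytic_on A \<Longrightarrow> g analytic_on A \<Longrightarrow> (\<lambda>e. ekr k (f e) (g e)) analytic_on A"
  unfolding ekr_def by (intro analytic_intros)

lemma thetac_analytic [analytic_intros]: "f analytic_on A \<Longrightarrow> (\<lambda>e. thetac i (f e)) analytic_on A"
  unfolding thetac_def by (cases "i = 0") (simp_all add: analytic_intros)

lemma Lf_analytic: "Lf i analytic_on {0}"
proof (induction i)
  case 0
  have "(\<lambda>e. 1 / (1 + e)) analytic_on {0::complex}" by (intro analytic_intros) auto
  then show ?case by simp
next
  case (Suc i)
  have "(\<lambda>e. Lf i e * thetac i (aa i e) * ekr k (aa i e) 1 * aa (Suc i) e / of_nat k) analytic_on {0}"
    using k1 by (intro analytic_intros Suc aa_analytic) auto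
  then show ?case by (simp add: fun_eq_iff)
qed

lemma Lf_fps: "Lf i has_fps_expansion LLs i"
  unfolding LLs_def by (rule analytic_at_imp_has_fps_expansion_0[OF Lf_analytic])

lemma AAs_fps: "(\<lambda>e. aa i e - pp i) has_fps_expansion AAs i"
  unfolding AAs_def by (rule analytic_at_imp_has_fps_expansion_0) (intro analytic_intros aa_analytic)

lemma AAs0: "AAs i $ 0 = 0"
  unfolding AAs_def fps_expansion_def by (simp add: aa_def pp_def)


lemma fps_cX_nth: "(fps_const B * (fps_const c * fps_X) ^ n) $ m = (if m = n then B * c ^ n else (0::complex))"
proof -
  have eq: "fps_const B * (fps_const c * fps_X) ^ n = fps_const (B * c ^ n) * fps_X ^ n"
    by (simp add: power_mult_distrib mult_ac)
  show ?thesis unfolding eq fps_mult_left_const_nth fps_X_power_nth by simp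
qed

lemma ee0: "(N - k) * d + j - 1 = ee 0 + j"
proof -
  have "(N - k) * d \<ge> 1" using kN d1 by simp
  then show ?thesis unfolding ee_def by simp
qed

lemma integrand_eq:
  assumes z0: "z 0 \<noteq> 0"
  shows "FF z = BB 0 z * ((z 1 - z 0) ^ j / z 0 ^ (j+1))"
proof -
  define P where "P = (\<Prod>i=1..d. z i ^ N)"
  define E2 where "E2 = (\<Prod>l=2..d. ek k (z (l - 1)) (z l))"
  define D2 where "D2 = (\<Prod>l=2..d-1. Dfac z l)"
  have E: "(\<Prod>l=1..d. ek k (z (l - 1)) (z l)) = z 0 * ekr k (z 0) (z 1) * E2"
    unfolding E2_def using d1 k1 by (simp add: prod.atLeast_Suc_atMost ek_split numeral_2_eq_2)
  have D: "(\<Prod>l=1..d-1. inverse (of_nat k * z l * (2 * z l - z (l - 1) - z (l + 1))))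
           = (if 1 < d then Dfac z 1 else 1) * D2"
  proof (cases "1 < d")
    case True
    then show ?thesis unfolding D2_def Dfac_def
      by (simp add: prod.atLeast_Suc_atMost numeral_2_eq_2)
  next
    case False
    then have "d = 1" using d1 by simp
    then show ?thesis unfolding D2_def by simp
  qed
  have T: "Tail 0 z = inverse P * E2 * D2"
    unfolding Tail_def P_def E2_def D2_def by (simp add: numeral_2_eq_2)
  have pw: "z 0 powi (- 2 - int j) = inverse (z 0 ^ (j+2))"
  proof -
    have "- 2 - int j = - int (j+2)" by simp
    then show ?thesis by (simp only: powi_neg_nat)
  qed
  have "FF z = inverse (z 0 ^ (j+2)) / P * (z 1 - z 0) ^ (ee 0 + j)
       * (z 0 * ekr k (z 0) (z 1) * E2) * ((if 1 < d then Dfac z 1 else 1) * D2)"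
    unfolding integrand_def E D pw ee0 P_def ..
  also have "\<dots> = ((z 1 - z 0) ^ ee 0 * ekr k (z 0) (z 1) * (if 1 < d then Dfac z 1 else 1) * (inverse P * E2 * D2))
       * ((z 1 - z 0) ^ j * (z 0 * inverse (z 0 ^ (j+2))))"
    by (simp only: power_add divide_inverse mult_ac)
  also have "z 0 * inverse (z 0 ^ (j+2)) = inverse (z 0 ^ (j+1))"
    using z0 by (simp add: field_simps)
  finally show ?thesis
    unfolding BB_def T theta_def by (simp add: divide_inverse)
qed

lemma R0:
  assumes z0: "z 0 \<noteq> 0"
  shows "FF z = Rep 0 z"
proof -
  define B where "B = BB 0 z"
  define H where "H = (\<lambda>e. Lf 0 e * B * inverse (z 0 - aa 0 e * z 1))"
  have "(deriv^^j) H 0 / fact j = B * (\<Sum>n\<le>j. (LLs 0 * AAs 0 ^ n) $ j * z 1 ^ n / (z 0 - pp 0 * z 1)^(n+1))"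
    by (rule rep_from_fun[OF Lf_fps AAs_fps AAs0]) (use z0 in \<open>simp_all add: pp_def H_def\<close>)
  also have "\<dots> = Rep 0 z" unfolding Rep_def gam_def B_def by simp
  finally have 1: "(deriv^^j) H 0 / fact j = Rep 0 z" .
  have ev: "eventually (\<lambda>e. H e = B * inverse (z 0 - (z 1 - z 0) * e)) (nhds 0)"
  proof -
    have "eventually (\<lambda>e::complex. e \<in> ball 0 (1/2)) (nhds 0)"
      by (rule eventually_nhds_in_open) auto
    then show ?thesis
    proof eventually_elim
      case (elim e)
      then have "norm e < 1/2" by simp
      have ne: "1 + e \<noteq> 0"
      proof
        assume "1 + e = 0"
        then have "e = -1" by (metis add.commute add_eq_0_iff)
        then show False using \<open>norm e < 1/2\<close> by simp
      qed
      have a: "z 0 - aa 0 e * z 1 = (z 0 - (z 1 - z 0) * e) / (1 + e)"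
        using ne unfolding aa_def by (simp add: field_simps)
      show ?case unfolding H_def a using ne by (simp add: inverse_divide divide_inverse)
    qed
  qed
  have fe: "(\<lambda>e. B * inverse (z 0 - (z 1 - z 0) * e)) has_fps_expansion
            fps_const B * inverse (fps_const (z 0) - fps_const (z 1 - z 0) * fps_X)"
    by (intro fps_expansion_intros) (use z0 in simp)
  have "(deriv^^j) H 0 / fact j = (deriv^^j) (\<lambda>e. B * inverse (z 0 - (z 1 - z 0) * e)) 0 / fact j"
    by (simp add: higher_deriv_cong_ev[OF ev refl])
  also have "\<dots> = (fps_const B * inverse (fps_const (z 0) - fps_const (z 1 - z 0) * fps_X)) $ j"
    by (rule fps_nth_fps_expansion[OF fe, symmetric])
  also have "\<dots> = (\<Sum>n\<le>j. (fps_const B * (fps_const (z 1 - z 0) * fps_X) ^ n) $ j / z 0 ^ (n+1))"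
    by (rule fps_inv_coeff) (use z0 in auto)
  also have "\<dots> = (\<Sum>n\<le>j. (if n = j then B * (z 1 - z 0) ^ j / z 0 ^ (j+1) else 0))"
    by (intro sum.cong refl) (simp only: fps_cX_nth, auto)
  also have "\<dots> = B * ((z 1 - z 0) ^ j / z 0 ^ (j+1))" by simp
  finally show ?thesis using 1 integrand_eq[of z, OF z0] B_def by simp
qed


lemma Tail_upd: "Tail i (z(i := v)) = Tail i z"
proof -
  have 1: "(\<Prod>l=i+1..d. (z(i := v)) l ^ N) = (\<Prod>l=i+1..d. z l ^ N)"
    by (rule prod.cong) auto
  have 2: "(\<Prod>l=i+2..d. ek k ((z(i := v)) (l - 1)) ((z(i := v)) l)) = (\<Prod>l=i+2..d. ek k (z (l - 1)) (z l))"
    by (rule prod.cong) auto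
  have 3: "(\<Prod>l=i+2..d-1. Dfac (z(i := v)) l) = (\<Prod>l=i+2..d-1. Dfac z l)"
    by (rule prod.cong) (auto simp: Dfac_def)
  show ?thesis unfolding Tail_def 1 2 3 ..
qed

lemma Tail_step:
  assumes "i + 2 \<le> d"
  shows "Tail i z = inverse (z (i+1) ^ N) * ek k (z (i+1)) (z (i+2)) * (if i + 2 < d then Dfac z (i+2) else 1) * Tail (i+1) z"
proof -
  have 1: "(\<Prod>l=i+1..d. z l ^ N) = z (i+1) ^ N * (\<Prod>l=i+2..d. z l ^ N)"
    using assms by (simp add: prod.atLeast_Suc_atMost)
  have 2: "(\<Prod>l=i+2..d. ek k (z (l - 1)) (z l)) = ek k (z (i+1)) (z (i+2)) * (\<Prod>l=i+3..d. ek k (z (l - 1)) (z l))"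
    using assms by (simp add: prod.atLeast_Suc_atMost numeral_3_eq_3 numeral_2_eq_2)
  have 3: "(\<Prod>l=i+2..d-1. Dfac z l) = (if i + 2 < d then Dfac z (i+2) else 1) * (\<Prod>l=i+3..d-1. Dfac z l)"
  proof (cases "i + 2 < d")
    case True
    then show ?thesis by (simp add: prod.atLeast_Suc_atMost numeral_3_eq_3 numeral_2_eq_2)
  next
    case False
    then show ?thesis by simp
  qed
  have T: "Tail (i+1) z = inverse (\<Prod>l=i+2..d. z l ^ N) * (\<Prod>l=i+3..d. ek k (z (l - 1)) (z l)) * (\<Prod>l=i+3..d-1. Dfac z l)"
    unfolding Tail_def by (simp add: numeral_3_eq_3 numeral_2_eq_2)
  show ?thesis unfolding Tail_def 1 2 3 T by (simp add: mult_ac numeral_3_eq_3 numeral_2_eq_2)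
qed

lemma Tail_last: "Tail (d-1) z = inverse (z d ^ N)"
  unfolding Tail_def using d1 by simp

lemma theta_hom: "theta i (a * y) y = thetac i a * y ^ ee i"
proof -
  have "y - a * y = y * (1 - a)" by (simp add: algebra_simps)
  then show ?thesis unfolding theta_def thetac_def by (simp add: power_mult_distrib mult.commute)
qed

lemma ee_step: "i + 1 < d \<Longrightarrow> ee i = ee (Suc i) + (N - k)"
proof -
  assume a: "i + 1 < d"
  have "d - i = Suc (d - Suc i)" using a by simp
  then have "(N - k) * (d - i) = (N - k) * (d - Suc i) + (N - k)" by simp
  moreover have "(N - k) * (d - Suc i) \<ge> 1"
  proof -
    have "N - k \<ge> 1" "d - Suc i \<ge> 1" using a kN by auto
    then have "1 * 1 \<le> (N - k) * (d - Suc i)" by (rule mult_le_mono)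
    then show ?thesis by simp
  qed
  ultimately show ?thesis unfolding ee_def using kN by arith
qed

lemma ee_last: "ee (d-1) = N - k - 1"
  unfolding ee_def using d1 by simp

lemma aa_Suc_inv:
  assumes "of_nat (Suc i) + e \<noteq> 0" "of_nat (Suc (Suc i)) + e \<noteq> 0"
  shows "aa (Suc i) e * (2 - aa i e) = 1"
proof -
  define A where "A = of_nat (Suc i) + e"
  have h1: "of_nat i + e = A - 1" "of_nat (Suc (Suc i)) + e = A + 1" unfolding A_def by simp_all
  have nz1: "A \<noteq> 0" using assms(1) unfolding A_def .
  have nz2: "A + 1 \<noteq> 0" using assms(2) h1(2) by metis
  note nz = nz1 nz2
  have "aa (Suc i) e * (2 - aa i e) = A / (A + 1) * (2 - (A - 1) / A)"
    unfolding aa_def h1 A_def[symmetric] by simp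
  also have "2 - (A - 1) / A = (A + 1) / A" using nz by (simp add: field_simps)
  finally show ?thesis using nz by simp
qed

lemma A1:
  assumes i: "i + 1 < d" and y: "z (i+1) \<noteq> 0"
    and e1: "of_nat (Suc i) + e \<noteq> 0" and e2: "of_nat (Suc (Suc i)) + e \<noteq> 0"
  shows "Lf i e * BB i (z(i := aa i e * z (i+1))) =
         Lf (Suc i) e * BB (Suc i) z * inverse (z (i+1) - aa (Suc i) e * z (i+2))"
proof -
  define y where "y = z (i+1)"
  define w2 where "w2 = z (i+2)"
  define a where "a = aa i e"
  define a' where "a' = aa (Suc i) e"
  define Dc where "Dc = (if i + 2 < d then Dfac z (i+2) else 1)"
  define T where "T = Tail (i+1) z"
  define R where "R = ekr k y w2"
  have ia: "a' * (2 - a) = 1" unfolding a'_def a_def by (rule aa_Suc_inv[OF e1 e2])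
  have yne: "y \<noteq> 0" using y by (simp add: y_def)
  have kne: "(of_nat k :: complex) \<noteq> 0" using k1 by simp
  have Df: "Dfac (z(i := a * y)) (i+1) = inverse (of_nat k * y * (2 * y - a * y - w2))"
    unfolding Dfac_def y_def w2_def by simp
  have a'ne: "a' \<noteq> 0" using ia by auto
  have key: "inverse (of_nat k * y * (2 * y - a * y - w2)) * y = a' / of_nat k * inverse (y - a' * w2)"
  proof -
    define X where "X = 2 * y - a * y - w2"
    have "a' * X = (a' * (2 - a)) * y - a' * w2" unfolding X_def by (simp add: algebra_simps)
    then have yX: "y - a' * w2 = a' * X" using ia by simp
    have "inverse (of_nat k * y * X) * y = inverse (of_nat k) * inverse X * (inverse y * y)"
      by (simp only: inverse_mult_distrib mult_ac)
    also have "\<dots> = inverse (of_nat k) * inverse X" using yne by simp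
    also have "\<dots> = inverse (of_nat k) * inverse X * (a' * inverse a')" using a'ne by simp
    also have "\<dots> = a' / of_nat k * inverse (a' * X)"
      by (simp only: inverse_mult_distrib divide_inverse mult_ac)
    finally show ?thesis unfolding yX X_def .
  qed
  have TS: "Tail i z = inverse (y ^ N) * (y * R) * Dc * T"
  proof -
    have "Tail i z = inverse (y ^ N) * ek k y w2 * Dc * T"
      using Tail_step[of i z] i unfolding Dc_def T_def y_def w2_def by simp
    then show ?thesis unfolding R_def using k1 by (simp add: ek_split)
  qed
  have pw: "y ^ ee i * y ^ k * inverse (y ^ N) = y ^ ee (Suc i)"
  proof -
    have nk: "(N - k) + k = N" using kN by simp
    have "y ^ ee i * y ^ k = y ^ (ee (Suc i) + ((N - k) + k))"
      by (simp only: ee_step[OF i] power_add mult.assoc)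
    also have "\<dots> = y ^ ee (Suc i) * y ^ N" by (simp only: nk power_add)
    finally have "y ^ ee i * y ^ k * inverse (y ^ N) = y ^ ee (Suc i) * (y ^ N * inverse (y ^ N))"
      by (simp only: mult.assoc)
    also have "y ^ N * inverse (y ^ N) = 1" using yne by simp
    finally show ?thesis by simp
  qed
  have "Lf i e * BB i (z(i := a * y)) =
        Lf i e * (thetac i a * y ^ ee i * (y ^ k * ekr k a 1) * inverse (of_nat k * y * (2 * y - a * y - w2))
        * (inverse (y ^ N) * (y * R) * Dc * T))"
  proof -
    have zi: "(z(i := a * y)) i = a * y" by simp
    have zs: "(z(i := a * y)) (i+1) = y" by (simp add: y_def)
    have "BB i (z(i := a * y)) = theta i (a*y) y * ekr k (a*y) y * Dfac (z(i := a * y)) (i+1) * Tail i z"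
      unfolding BB_def zi zs Tail_upd using i by simp
    also have "\<dots> = thetac i a * y ^ ee i * (y ^ k * ekr k a 1) * inverse (of_nat k * y * (2 * y - a * y - w2))
        * (inverse (y ^ N) * (y * R) * Dc * T)"
      by (simp only: theta_hom ekr_hom[OF k1] Df TS)
    finally show ?thesis by simp
  qed
  also have "\<dots> = Lf i e * thetac i a * ekr k a 1 * R * Dc * T * (y ^ ee i * y ^ k * inverse (y ^ N)) *
        (inverse (of_nat k * y * (2 * y - a * y - w2)) * y)"
    by (simp only: mult_ac)
  also have "\<dots> = Lf i e * thetac i a * ekr k a 1 * R * Dc * T * y ^ ee (Suc i) * (a' / of_nat k * inverse (y - a' * w2))"
    unfolding pw key ..
  also have "\<dots> = Lf (Suc i) e * BB (Suc i) z * inverse (z (i+1) - aa (Suc i) e * z (i+2))"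
    unfolding BB_def theta_def
    by (simp add: a_def a'_def y_def w2_def R_def Dc_def T_def mult_ac)
  finally show ?thesis by (simp add: a_def y_def)
qed


lemma A2:
  assumes y: "z d \<noteq> 0"
  shows "Lf (d-1) e * BB (d-1) (z(d-1 := aa (d-1) e * z d)) = Kf e * inverse (z d)"
proof -
  define y where "y = z d"
  define a where "a = aa (d-1) e"
  have yne: "y \<noteq> 0" using y by (simp add: y_def)
  have dd: "d - 1 + 1 = d" using d1 by simp
  have zi: "(z(d-1 := a * y)) (d-1) = a * y" by simp
  have zs: "(z(d-1 := a * y)) (d-1+1) = y" unfolding dd y_def using d1 by simp
  have "BB (d-1) (z(d-1 := a * y)) = theta (d-1) (a*y) y * ekr k (a*y) y * inverse (y ^ N)"
    unfolding BB_def zi zs Tail_upd Tail_last using d1 by (simp add: y_def)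
  also have "\<dots> = thetac (d-1) a * ekr k a 1 * (y ^ (N - k - 1) * y ^ k * inverse (y ^ N))"
    by (simp only: theta_hom ekr_hom[OF k1] ee_last mult_ac)
  also have "y ^ (N - k - 1) * y ^ k * inverse (y ^ N) = inverse y"
  proof -
    have "y ^ (N - k - 1) * y ^ k = y ^ (N - 1)" using kN by (simp add: power_add[symmetric])
    moreover have "y ^ N = y ^ (N - 1) * y" using kN by (simp add: power_Suc2[symmetric])
    ultimately show ?thesis using yne by (simp add: inverse_mult_distrib)
  qed
  finally have X: "BB (d-1) (z(d-1 := a * y)) = thetac (d-1) a * ekr k a 1 * inverse y" .
  have "Lf (d-1) e * BB (d-1) (z(d-1 := a * y)) = Kf e * inverse y"
    unfolding X unfolding Kf_def a_def by (simp only: mult_ac)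
  then show ?thesis unfolding a_def y_def .
qed

lemma half_nz: "norm (e::complex) < 1/2 \<Longrightarrow> of_nat (Suc m) + e \<noteq> 0"
proof
  assume n: "norm e < 1/2" and h: "of_nat (Suc m) + e = 0"
  then have "e = - of_nat (Suc m)" by (metis add.commute add_eq_0_iff)
  then have "norm e = of_nat (Suc m)" by (simp only: norm_minus_cancel norm_of_nat)
  then show False using n by simp
qed

lemma pp_rel: "z (Suc i) \<noteq> pp (Suc i) * w \<Longrightarrow> 2 * z (Suc i) - pp i * z (Suc i) - w \<noteq> 0"
proof
  assume a: "z (Suc i) \<noteq> pp (Suc i) * w" and b: "2 * z (Suc i) - pp i * z (Suc i) - w = 0"
  then have h: "(2 - pp i) * z (Suc i) = w" by (simp add: algebra_simps)
  have nz: "2 - pp i \<noteq> 0" unfolding two_minus_pp using ofnat_Suc_nz[of i] ofnat_Suc_nz[of "Suc i"]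
    by (simp del: of_nat_Suc)
  have "z (Suc i) = w / (2 - pp i)" using h nz by (simp add: field_simps)
  also have "\<dots> = pp (Suc i) * w" unfolding two_minus_pp unfolding pp_def by simp
  finally have "z (Suc i) = pp (Suc i) * w" .
  with a show False by simp
qed

lemma theta_analytic [analytic_intros]: "(\<lambda>w. theta i w y) analytic_on A"
  unfolding theta_def by (cases "i = 0") (simp_all add: analytic_intros)

lemma rep_all:
  "i < d \<Longrightarrow> (\<forall>l. i \<le> l \<and> l \<le> d \<longrightarrow> z l \<noteq> 0) \<Longrightarrow> z i \<noteq> pp i * z (Suc i) \<Longrightarrow> Phi i z = Rep i z"
proof (induction i arbitrary: z)
  case 0
  then show ?case using R0[of z] by (simp add: Phi_def)
next
  case (Suc i)
  define y where "y = z (Suc i)"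
  define w2 where "w2 = z (Suc (Suc i))"
  have yne: "y \<noteq> 0" using Suc.prems unfolding y_def by auto
  have ypp: "y \<noteq> pp (Suc i) * w2" using Suc.prems(3) unfolding y_def w2_def .
  have kne: "(of_nat k :: complex) \<noteq> 0" using k1 by simp
  define Bf where "Bf = (\<lambda>w. BB i (z(i := w)))"
  have Bf_eq: "Bf = (\<lambda>w. theta i w y * ekr k w y * inverse (of_nat k * y * (2 * y - w - w2)) * Tail i z)"
    unfolding Bf_def BB_def using Suc.prems(1) by (auto simp: Tail_upd Dfac_def y_def w2_def)
  have Ban: "Bf analytic_on {pp i * y}"
    unfolding Bf_eq
    by (intro analytic_intros) (use yne kne pp_rel[of z i "z (Suc (Suc i))", OF Suc.prems(3)] in \<open>auto simp: y_def w2_def\<close>)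
  have ev: "eventually (\<lambda>w. Phi i (z(i := w)) = Bf w * (\<Sum>n\<le>j. (LLs i * AAs i ^ n) $ j * y ^ n / (w - pp i * y) ^ (n+1))) (at (pp i * y))"
  proof -
    have "eventually (\<lambda>w. w \<noteq> 0 \<and> w \<noteq> pp i * y) (at (pp i * y))"
      by (intro eventually_conj eventually_neq_at_within)
    then show ?thesis
    proof eventually_elim
      case (elim w)
      have "Phi i (z(i := w)) = Rep i (z(i := w))"
        by (rule Suc.IH) (use Suc.prems elim in \<open>auto simp: y_def\<close>)
      then show ?case unfolding Rep_def gam_def Bf_def y_def by simp
    qed
  qed
  have "Phi (Suc i) z = residue (\<lambda>w. Phi i (z(i := w))) (pp i * y)"
    unfolding y_def by (rule Phi_Suc)
  also have "\<dots> = (deriv^^j) (\<lambda>e. Lf i e * Bf (aa i e * y)) 0 / fact j"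
    by (rule step_full[OF Lf_fps AAs_fps AAs0 Ban ev])
  also have "\<dots> = BB (Suc i) z * (\<Sum>n\<le>j. (LLs (Suc i) * AAs (Suc i) ^ n) $ j * w2 ^ n / (y - pp (Suc i) * w2) ^ (n+1))"
  proof (rule rep_from_fun[OF Lf_fps AAs_fps AAs0])
    show "y - pp (Suc i) * w2 \<noteq> 0" using ypp by simp
    have "eventually (\<lambda>e::complex. e \<in> ball 0 (1/2)) (nhds 0)"
      by (rule eventually_nhds_in_open) auto
    then show "eventually (\<lambda>e. Lf i e * Bf (aa i e * y) = Lf (Suc i) e * BB (Suc i) z * inverse (y - aa (Suc i) e * w2)) (nhds 0)"
    proof eventually_elim
      case (elim e)
      then have ne: "norm e < 1/2" by simp
      show ?case unfolding Bf_def y_def w2_def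
        using A1[of i z e] Suc.prems(1) yne half_nz[OF ne, of i] half_nz[OF ne, of "Suc i"]
        by (simp add: y_def)
    qed
  qed
  also have "\<dots> = Rep (Suc i) z" unfolding Rep_def gam_def y_def w2_def by simp
  finally show ?case .
qed

lemma Kf_analytic: "Kf analytic_on {0}"
proof -
  have "(\<lambda>e. Lf (d-1) e * thetac (d-1) (aa (d-1) e) * ekr k (aa (d-1) e) 1) analytic_on {0}"
    by (intro analytic_intros Lf_analytic aa_analytic)
  then show ?thesis unfolding Kf_def[abs_def] .
qed

lemma Phi_d:
  assumes zd: "z d \<noteq> 0"
  shows "Phi d z = (deriv^^j) Kf 0 / fact j * inverse (z d)"
proof -
  define i where "i = d - 1"
  have di: "d = Suc i" using d1 by (simp add: i_def)
  define y where "y = z d"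
  define Bf where "Bf = (\<lambda>w. BB i (z(i := w)))"
  have ni: "\<not> (Suc i < d)" "Suc i = d" "d \<noteq> i" using di by simp_all
  have Bf_eq: "Bf = (\<lambda>w. theta i w y * ekr k w y * Tail i z)"
    unfolding Bf_def BB_def by (auto simp: Tail_upd y_def ni)
  have Ban: "Bf analytic_on {pp i * y}"
    unfolding Bf_eq by (intro analytic_intros)
  have ev: "eventually (\<lambda>w. Phi i (z(i := w)) = Bf w * (\<Sum>n\<le>j. (LLs i * AAs i ^ n) $ j * y ^ n / (w - pp i * y) ^ (n+1))) (at (pp i * y))"
  proof -
    have "eventually (\<lambda>w. w \<noteq> 0 \<and> w \<noteq> pp i * y) (at (pp i * y))"
      by (intro eventually_conj eventually_neq_at_within)
    then show ?thesis
    proof eventually_elim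
      case (elim w)
      have "Phi i (z(i := w)) = Rep i (z(i := w))"
      proof (rule rep_all)
        show "i < d" using di by simp
        show "\<forall>l. i \<le> l \<and> l \<le> d \<longrightarrow> (z(i := w)) l \<noteq> 0"
        proof (intro allI impI)
          fix l assume "i \<le> l \<and> l \<le> d"
          then have "l = i \<or> l = d" using di by auto
          then show "(z(i := w)) l \<noteq> 0" using elim zd di by auto
        qed
        show "(z(i := w)) i \<noteq> pp i * (z(i := w)) (Suc i)" using elim di by (simp add: y_def)
      qed
      then show ?case unfolding Rep_def gam_def Bf_def y_def using di by simp
    qed
  qed
  have "Phi d z = residue (\<lambda>w. Phi i (z(i := w))) (pp i * y)"
    using Phi_Suc[of i z] unfolding ni(2) y_def by simp
  also have "\<dots> = (deriv^^j) (\<lambda>e. Lf i e * Bf (aa i e * y)) 0 / fact j"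
    by (rule step_full[OF Lf_fps AAs_fps AAs0 Ban ev])
  also have "(\<lambda>e. Lf i e * Bf (aa i e * y)) = (\<lambda>e. Kf e * inverse y)"
    unfolding Bf_def i_def y_def using A2[of z, OF zd] by simp
  also have "(deriv^^j) (\<lambda>e. Kf e * inverse y) 0 = (deriv^^j) Kf 0 * inverse y"
  proof -
    have K: "Kf has_fps_expansion fps_expansion Kf 0"
      by (rule analytic_at_imp_has_fps_expansion_0[OF Kf_analytic])
    have "(deriv^^j) (\<lambda>e. Kf e * inverse y) 0 / fact j = (fps_expansion Kf 0 * fps_const (inverse y)) $ j"
      by (rule fps_nth_fps_expansion[symmetric]) (intro fps_expansion_intros K)
    also have "\<dots> = (deriv^^j) Kf 0 / fact j * inverse y"
      by (simp add: fps_nth_fps_expansion[OF K])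
    finally show ?thesis by (simp add: field_simps)
  qed
  finally show ?thesis unfolding y_def by (simp add: field_simps)
qed


lemma pp_nz: "1 \<le> v \<Longrightarrow> pp v \<noteq> 0"
  unfolding pp_def using ofnat_Suc_nz[of v] by (simp del: of_nat_Suc)

lemma zero_branch:
  "False \<in> set bs \<Longrightarrow> length bs < d \<Longrightarrow>
   (\<forall>l. Suc (length bs) \<le> l \<and> l \<le> d \<longrightarrow> z l \<noteq> 0 \<and> (l < d \<longrightarrow> 2 * z l \<noteq> z (Suc l))) \<Longrightarrow>
   branch_res FF bs z = 0"
proof (induction bs arbitrary: z)
  case Nil
  then show ?case by simp
next
  case (Cons b bs)
  define v where "v = Suc (length bs)"
  define P where "P = (if b then z (Suc v) / (2 - mid_coeff bs) else 0)"
  have br: "branch_res FF (b # bs) z = residue (\<lambda>w. branch_res FF bs (z(v := w))) P"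
    by (simp add: v_def P_def)
  have vd: "v < d" using Cons.prems(2) by (simp add: v_def)
  show ?case
  proof (cases "False \<in> set bs")
    case True
    have "eventually (\<lambda>w. w \<noteq> 0 \<and> w \<noteq> z (Suc v) / 2) (at P)"
      by (intro eventually_conj eventually_neq_at_within)
    then have "eventually (\<lambda>w. branch_res FF bs (z(v := w)) = 0) (at P)"
    proof eventually_elim
      case (elim w)
      show ?case
      proof (rule Cons.IH[OF True])
        show "length bs < d" using vd by (simp add: v_def)
        show "\<forall>l. Suc (length bs) \<le> l \<and> l \<le> d \<longrightarrow> (z(v := w)) l \<noteq> 0 \<and> (l < d \<longrightarrow> 2 * (z(v := w)) l \<noteq> (z(v := w)) (Suc l))"
        proof (intro allI impI)
          fix l assume l: "Suc (length bs) \<le> l \<and> l \<le> d"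
          show "(z(v := w)) l \<noteq> 0 \<and> (l < d \<longrightarrow> 2 * (z(v := w)) l \<noteq> (z(v := w)) (Suc l))"
          proof (cases "l = v")
            case True
            then show ?thesis using elim by (auto simp: field_simps)
          next
            case False
            then have "Suc (length (b # bs)) \<le> l" using l by (simp add: v_def)
            then show ?thesis using Cons.prems(3) l False by (auto simp: v_def)
          qed
        qed
      qed
    qed
    then have "residue (\<lambda>w. branch_res FF bs (z(v := w))) P = residue (\<lambda>w. 0) P"
      by (rule residue_cong) simp
    then show ?thesis using br by (simp add: residue_const)
  next
    case False
    then have b: "b = False" using Cons.prems(1) by auto
    have bs: "bs = replicate (length bs) True"
      using False by (induction bs) auto
    have P0: "P = 0" by (simp add: P_def b)
    have Phiv: "branch_res FF bs = Phi v"
      unfolding Phi_def v_def by (subst bs) simp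
    define y where "y = z (Suc v)"
    have yne: "y \<noteq> 0" and y2: "Suc v < d \<longrightarrow> 2 * y \<noteq> z (Suc (Suc v))"
      using Cons.prems(3) vd unfolding y_def v_def by auto
    have kne: "(of_nat k :: complex) \<noteq> 0" using k1 by simp
    define Bf where "Bf = (\<lambda>w. BB v (z(v := w)))"
    have Ban: "Bf analytic_on {0}"
    proof (cases "Suc v < d")
      case True
      have "Bf = (\<lambda>w. theta v w y * ekr k w y * inverse (of_nat k * y * (2 * y - w - z (Suc (Suc v)))) * Tail v z)"
        unfolding Bf_def BB_def using True by (auto simp: Tail_upd Dfac_def y_def)
      then show ?thesis
        by (simp only:) (intro analytic_intros, use yne kne y2 True in auto)
    next
      case False
      have "Bf = (\<lambda>w. theta v w y * ekr k w y * Tail v z)"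
        unfolding Bf_def BB_def using False by (auto simp: Tail_upd y_def)
      then show ?thesis by (simp only:) (intro analytic_intros)
    qed
    have qnz: "pp v * y \<noteq> 0" using pp_nz[of v] yne by (simp add: v_def)
    have ev: "eventually (\<lambda>w. branch_res FF bs (z(v := w)) = Bf w * (\<Sum>n\<le>j. (gam v n * y ^ n) / (w - pp v * y) ^ (n+1))) (at 0)"
    proof -
      have "eventually (\<lambda>w. w \<noteq> 0 \<and> w \<noteq> pp v * y) (at 0)"
        by (intro eventually_conj eventually_neq_at_within)
      then show ?thesis
      proof eventually_elim
        case (elim w)
        have "Phi v (z(v := w)) = Rep v (z(v := w))"
        proof (rule rep_all[OF vd])
          show "\<forall>l. v \<le> l \<and> l \<le> d \<longrightarrow> (z(v := w)) l \<noteq> 0"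
            using elim Cons.prems(3) by (auto simp: v_def)
          show "(z(v := w)) v \<noteq> pp v * (z(v := w)) (Suc v)" using elim by (simp add: y_def)
        qed
        then show ?case unfolding Phiv Rep_def Bf_def y_def by simp
      qed
    qed
    have "residue (\<lambda>w. branch_res FF bs (z(v := w))) 0 = 0"
      by (rule zero_step[OF Ban qnz ev])
    then show ?thesis using br P0 by simp
  qed
qed

lemma w_number_eq: "w_number N k d j = (deriv^^j) Kf 0 / fact j"
proof -
  define C where "C = (deriv^^j) Kf 0 / fact j"
  define S where "S = {bs::bool list. length bs = d - 1}"
  define r where "r = replicate (d-1) True"
  have fin: "finite S"
  proof -
    have "S = {xs. set xs \<subseteq> UNIV \<and> length xs = d - 1}" by (simp add: S_def)
    then show ?thesis using finite_lists_length_eq[of "UNIV :: bool set" "d-1"] by simp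
  qed
  have rS: "r \<in> S" by (simp add: r_def S_def)
  have trm: "residue (\<lambda>w. branch_res FF bs ((\<lambda>_. 0)(d := w))) 0 = (if bs = r then C else 0)"
    if bs: "bs \<in> S" for bs
  proof (cases "bs = r")
    case True
    have Phid: "branch_res FF r = Phi d" unfolding Phi_def r_def using d1 by simp
    have "eventually (\<lambda>w. branch_res FF bs ((\<lambda>_. 0)(d := w)) = C / (w - 0)) (at 0)"
      using eventually_neq_at_within[of 0 0 UNIV]
    proof eventually_elim
      case (elim w)
      then show ?case unfolding True Phid using Phi_d[of "(\<lambda>_. 0)(d := w)"] by (simp add: C_def divide_inverse)
    qed
    then have "residue (\<lambda>w. branch_res FF bs ((\<lambda>_. 0)(d := w))) 0 = residue (\<lambda>w. C / (w - 0)) 0"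
      by (rule residue_cong) simp
    also have "\<dots> = C" using residue_simple[of UNIV 0 "\<lambda>_. C"] by simp
    finally show ?thesis using True by simp
  next
    case False
    have lb: "length bs = d - 1" using bs by (simp add: S_def)
    have F: "False \<in> set bs"
    proof (rule ccontr)
      assume "False \<notin> set bs"
      then have "bs = replicate (length bs) True" by (induction bs) auto
      then show False using False lb by (simp add: r_def)
    qed
    have "eventually (\<lambda>w. branch_res FF bs ((\<lambda>_. 0)(d := w)) = 0) (at 0)"
      using eventually_neq_at_within[of 0 0 UNIV]
    proof eventually_elim
      case (elim w)
      show ?case
      proof (rule zero_branch[OF F])
        show "length bs < d" using lb d1 by simp
        show "\<forall>l. Suc (length bs) \<le> l \<and> l \<le> d \<longrightarrow> ((\<lambda>_. 0)(d := w)) l \<noteq> 0 \<and> (l < d \<longrightarrow> 2 * ((\<lambda>_. 0)(d := w)) l \<noteq> ((\<lambda>_. 0)(d := w)) (Suc l))"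
          using lb d1 elim by auto
      qed
    qed
    then have "residue (\<lambda>w. branch_res FF bs ((\<lambda>_. 0)(d := w))) 0 = residue (\<lambda>w. 0) 0"
      by (rule residue_cong) simp
    then show ?thesis using False by (simp add: residue_const)
  qed
  have "w_number N k d j = (\<Sum>bs\<in>S. residue (\<lambda>w. branch_res FF bs ((\<lambda>_. 0)(d := w))) 0)"
    unfolding w_number_def iter_res_def S_def ..
  also have "\<dots> = (\<Sum>bs\<in>S. if bs = r then C else 0)"
    by (rule sum.cong) (use trm in auto)
  also have "\<dots> = C" using fin rS by simp
  finally show ?thesis unfolding C_def .
qed


definition PP :: "nat \<Rightarrow> complex \<Rightarrow> complex" where "PP m e = (\<Prod>R=1..m. of_nat R + of_nat k * e)"
definition QQ :: "nat \<Rightarrow> complex \<Rightarrow> complex" where "QQ i e = (\<Prod>t=1..i. (of_nat t + e) ^ N)"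
definition qq :: "nat \<Rightarrow> complex \<Rightarrow> complex" where "qq i e = (if i = 0 then 1 else of_nat i + e)"

lemma block_prod: "(\<Prod>R=m+1..m+n. f R) = (\<Prod>r=0..<n. f (m + n - r))" for m n :: nat
  by (rule prod.reindex_bij_witness[where i="\<lambda>r. m + n - r" and j="\<lambda>R. m + n - R"]) (auto simp: diff_diff_cancel)

lemma PP_Suc: "PP (k * Suc i) e = PP (k * i) e * (\<Prod>R=k*i+1..k*i+k. of_nat R + of_nat k * e)"
proof -
  have e: "k * Suc i = k * i + k" by simp
  show ?thesis unfolding PP_def e by (rule prod.ub_add_nat) simp
qed

lemma EKR:
  assumes q: "of_nat (Suc i) + e \<noteq> 0"
  shows "ekr k (aa i e) 1 * (of_nat (Suc i) + e) ^ k = of_nat k * (\<Prod>R=k*i+1..k*i+k. of_nat R + of_nat k * e)"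
proof -
  define q where "q = of_nat (Suc i) + e"
  obtain k' where k': "k = Suc k'" using k1 by (cases k) auto
  have qne: "q \<noteq> 0" using q by (simp add: q_def)
  have a: "aa i e = (q - 1) / q" unfolding aa_def q_def by simp
  have "(\<Prod>r=1..k'. of_nat r * aa i e + of_nat (k - r) * 1) * q ^ k' = (\<Prod>r=1..k'. (of_nat r * aa i e + of_nat (k - r)) * q)"
    by (simp add: prod.distrib)
  also have "\<dots> = (\<Prod>r=1..k'. of_nat k * q - of_nat r)"
  proof (rule prod.cong[OF refl])
    fix r assume r: "r \<in> {1..k'}"
    have e1: "of_nat (k - r) = (of_nat k - of_nat r :: complex)" using r k' by (simp add: of_nat_diff)
    have "(of_nat r * aa i e + of_nat (k - r)) * q = of_nat r * (aa i e * q) + (of_nat k - of_nat r) * q"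
      by (simp only: e1 distrib_right mult.assoc)
    also have "aa i e * q = q - 1" unfolding a using qne by simp
    finally show "(of_nat r * aa i e + of_nat (k - r)) * q = of_nat k * q - of_nat r"
      by (simp add: algebra_simps)
  qed
  finally have h1: "(\<Prod>r=1..k'. of_nat r * aa i e + of_nat (k - r) * 1) * q ^ k' = (\<Prod>r=1..k'. of_nat k * q - of_nat r)" .
  have "(\<Prod>R=k*i+1..k*i+k. of_nat R + of_nat k * e) = (\<Prod>r=0..<k. of_nat (k*i + k - r) + of_nat k * e)"
    by (rule block_prod)
  also have "\<dots> = (\<Prod>r=0..<k. of_nat k * q - of_nat r)"
  proof (rule prod.cong[OF refl])
    fix r assume "r \<in> {0..<k}"
    then have "of_nat (k*i + k - r) = (of_nat (k*i + k) - of_nat r :: complex)" by (simp add: of_nat_diff)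
    then show "of_nat (k*i + k - r) + of_nat k * e = of_nat k * q - of_nat r"
      unfolding q_def by (simp add: algebra_simps)
  qed
  also have "\<dots> = (of_nat k * q) * (\<Prod>r=1..k'. of_nat k * q - of_nat r)"
  proof -
    have "{0..<k} = insert 0 {1..k'}" using k' by auto
    then show ?thesis by simp
  qed
  finally have h2: "(\<Prod>R=k*i+1..k*i+k. of_nat R + of_nat k * e) = (of_nat k * q) * (\<Prod>r=1..k'. of_nat k * q - of_nat r)" .
  have "ekr k (aa i e) 1 * q ^ k = of_nat k ^ 2 * q * ((\<Prod>r=1..k'. of_nat r * aa i e + of_nat (k - r) * 1) * q ^ k')"
    unfolding ekr_def k' by (simp add: mult_ac)
  also have "\<dots> = of_nat k * ((of_nat k * q) * (\<Prod>r=1..k'. of_nat k * q - of_nat r))"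
    unfolding h1 by (simp add: power2_eq_square mult_ac)
  finally show ?thesis unfolding h2 q_def .
qed

lemma thetac_q:
  assumes q: "of_nat (Suc i) + e \<noteq> 0"
  shows "thetac i (aa i e) * (of_nat (Suc i) + e) ^ ee i = qq i e ^ ee i"
proof (cases "i = 0")
  case True
  have "(1 - aa 0 e) * (1 + e) = 1" using q True unfolding aa_def by (simp add: divide_simps)
  then have "((1 - aa 0 e) * (1 + e)) ^ ee 0 = 1" by simp
  then show ?thesis using True unfolding thetac_def qq_def by (simp only: power_mult_distrib) simp
next
  case False
  have "aa i e * (of_nat (Suc i) + e) = of_nat i + e" using q unfolding aa_def by simp
  then have "(aa i e * (of_nat (Suc i) + e)) ^ ee i = (of_nat i + e) ^ ee i" by simp
  then show ?thesis using False unfolding thetac_def qq_def by (simp only: power_mult_distrib) simp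
qed


lemma QQ_Suc: "QQ (Suc i) e = QQ i e * (of_nat (Suc i) + e) ^ N"
  unfolding QQ_def by (simp add: prod.cl_ivl_Suc)

lemma Inv:
  "i \<le> d - 1 \<Longrightarrow> norm e < 1/2 \<Longrightarrow> Lf i e * (of_nat (Suc i) + e) * QQ i e * qq i e ^ ee i = PP (k*i) e"
proof (induction i)
  case 0
  have "1 + e \<noteq> 0" using half_nz[OF 0(2), of 0] by simp
  then show ?case by (simp add: QQ_def qq_def PP_def)
next
  case (Suc i)
  define q1 where "q1 = of_nat (Suc i) + e"
  define q2 where "q2 = of_nat (Suc (Suc i)) + e"
  define a where "a = aa i e"
  have q1ne: "q1 \<noteq> 0" unfolding q1_def by (rule half_nz[OF Suc.prems(2)])
  have q2ne: "q2 \<noteq> 0" unfolding q2_def by (rule half_nz[OF Suc.prems(2)])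
  have id: "i + 1 < d" using Suc.prems(1) d1 by simp
  have IH: "Lf i e * q1 * QQ i e * qq i e ^ ee i = PP (k*i) e"
    using Suc.IH Suc.prems unfolding q1_def by simp
  have aq: "aa (Suc i) e * q2 = q1" unfolding aa_def q1_def q2_def using q2ne[unfolded q2_def] by simp
  have th: "thetac i a * q1 ^ ee i = qq i e ^ ee i" unfolding a_def q1_def by (rule thetac_q[OF q1ne[unfolded q1_def]])
  have ek: "ekr k a 1 * q1 ^ k = of_nat k * (\<Prod>R=k*i+1..k*i+k. of_nat R + of_nat k * e)"
    unfolding a_def q1_def by (rule EKR[OF q1ne[unfolded q1_def]])
  have pw: "q1 ^ N * q1 ^ ee (Suc i) = q1 ^ ee i * q1 ^ k"
  proof -
    have "N + ee (Suc i) = ee i + k" using ee_step[OF id] kN by simp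
    then show ?thesis by (simp only: power_add[symmetric])
  qed
  have kne: "(of_nat k :: complex) \<noteq> 0" using k1 by simp
  have "Lf (Suc i) e * q2 * QQ (Suc i) e * qq (Suc i) e ^ ee (Suc i)
      = Lf i e * thetac i a * ekr k a 1 * (aa (Suc i) e * q2) / of_nat k * QQ i e * (q1 ^ N * q1 ^ ee (Suc i))"
    by (simp add: QQ_Suc qq_def a_def q1_def mult_ac)
  also have "\<dots> = (Lf i e * q1 * QQ i e * (thetac i a * q1 ^ ee i)) * (ekr k a 1 * q1 ^ k) / of_nat k"
    unfolding aq pw by (simp add: mult_ac)
  also have "\<dots> = PP (k*i) e * (\<Prod>R=k*i+1..k*i+k. of_nat R + of_nat k * e)"
    unfolding th ek IH using kne by simp
  also have "\<dots> = PP (k * Suc i) e" by (rule PP_Suc[symmetric])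
  finally show ?case unfolding q2_def by simp
qed

lemma Kf_closed:
  assumes ne: "norm e < 1/2"
  shows "Kf e * QQ d e = of_nat k * PP (k*d) e"
proof -
  define i where "i = d - 1"
  have di: "d = Suc i" using d1 by (simp add: i_def)
  define q1 where "q1 = of_nat (Suc i) + e"
  define a where "a = aa i e"
  have q1ne: "q1 \<noteq> 0" unfolding q1_def by (rule half_nz[OF ne])
  have IH: "Lf i e * q1 * QQ i e * qq i e ^ ee i = PP (k*i) e"
    using Inv[of i e] ne unfolding q1_def i_def by simp
  have th: "thetac i a * q1 ^ ee i = qq i e ^ ee i" unfolding a_def q1_def by (rule thetac_q[OF q1ne[unfolded q1_def]])
  have ek: "ekr k a 1 * q1 ^ k = of_nat k * (\<Prod>R=k*i+1..k*i+k. of_nat R + of_nat k * e)"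
    unfolding a_def q1_def by (rule EKR[OF q1ne[unfolded q1_def]])
  have pw: "q1 ^ N = q1 ^ ee i * q1 ^ k * q1"
  proof -
    have "N = ee i + k + 1" using ee_last kN unfolding i_def by simp
    then show ?thesis by (metis power_add power_one_right)
  qed
  have QQd: "QQ d e = QQ i e * q1 ^ N"
  proof -
    have "QQ d e = QQ (Suc i) e" by (simp only: di)
    then show ?thesis unfolding QQ_Suc q1_def .
  qed
  have "Kf e * QQ d e = Lf i e * thetac i a * ekr k a 1 * (QQ i e * q1 ^ N)"
    unfolding Kf_def QQd by (simp add: a_def i_def)
  also have "\<dots> = (Lf i e * q1 * QQ i e * (thetac i a * q1 ^ ee i)) * (ekr k a 1 * q1 ^ k)"
    unfolding pw by (simp add: mult_ac)
  also have "\<dots> = of_nat k * (PP (k*i) e * (\<Prod>R=k*i+1..k*i+k. of_nat R + of_nat k * e))"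
    unfolding th ek IH by (simp add: mult_ac)
  also have "\<dots> = of_nat k * PP (k*d) e"
  proof -
    have "PP (k*d) e = PP (k * Suc i) e" by (simp only: di)
    then show ?thesis unfolding PP_Suc by simp
  qed
  finally show ?thesis .
qed


definition fC :: "complex \<Rightarrow> complex" where "fC e = PP (k*d) e / QQ d e"

lemma QQ_nz: "norm e < 1/2 \<Longrightarrow> QQ i e \<noteq> 0"
proof -
  assume ne: "norm e < 1/2"
  have A: "\<forall>t\<in>{Suc 0..i}. of_nat t + e \<noteq> 0"
  proof
    fix t assume t: "t \<in> {Suc 0..i}"
    have "t = Suc (t - 1)" using t by simp
    then show "of_nat t + e \<noteq> 0" using half_nz[OF ne, of "t - 1"] by metis
  qed
  then show ?thesis unfolding QQ_def by (simp add: prod_zero_iff)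
qed

lemma fC_holo: "fC holomorphic_on ball 0 (1/2)"
proof -
  have "(\<lambda>e. PP (k*d) e / QQ d e) holomorphic_on ball 0 (1/2)"
    unfolding PP_def QQ_def
    by (intro holomorphic_intros) (use QQ_nz[unfolded QQ_def] in auto)
  then show ?thesis unfolding fC_def[abs_def] .
qed

lemma Kf_fC: "norm e < 1/2 \<Longrightarrow> Kf e = of_nat k * fC e"
  using Kf_closed[of e] QQ_nz[of e d] unfolding fC_def by (simp add: field_simps)

lemma final_local:
  "w_number N k d j / of_nat k =
    of_real ((deriv ^^ j)
               (\<lambda>e::real. (\<Prod>r=1..k*d. real r + real k * e) / (\<Prod>r=1..d. (real r + e) ^ N)) 0
             / fact j)"
proof -
  define fR where "fR = (\<lambda>e::real. (\<Prod>r=1..k*d. real r + real k * e) / (\<Prod>r=1..d. (real r + e) ^ N))"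
  have kne: "(of_nat k :: complex) \<noteq> 0" using k1 by simp
  have ev: "eventually (\<lambda>e. Kf e = of_nat k * fC e) (nhds 0)"
  proof -
    have "eventually (\<lambda>e::complex. e \<in> ball 0 (1/2)) (nhds 0)"
      by (rule eventually_nhds_in_open) auto
    then show ?thesis by eventually_elim (simp add: Kf_fC)
  qed
  have "(deriv^^j) Kf 0 = (deriv^^j) (\<lambda>e. of_nat k * fC e) 0"
    by (rule higher_deriv_cong_ev[OF ev refl])
  also have "\<dots> = of_nat k * (deriv^^j) fC 0"
    by (rule higher_deriv_cmult[OF fC_holo]) auto
  finally have K: "(deriv^^j) Kf 0 = of_nat k * (deriv^^j) fC 0" .
  have R: "(deriv^^j) fC (of_real 0) = of_real ((deriv^^j) fR 0)"
  proof (rule higher_deriv_real[OF fC_holo])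
    fix x :: real assume "\<bar>x\<bar> < 1/2"
    show "fC (of_real x) = of_real (fR x)"
      unfolding fC_def PP_def QQ_def fR_def by simp
  qed simp
  have "w_number N k d j / of_nat k = (deriv^^j) fC 0 / fact j"
    unfolding w_number_eq K using kne by simp
  also have "\<dots> = of_real ((deriv^^j) fR 0 / fact j)"
    using R by simp
  finally show ?thesis unfolding fR_def .
qed

end


theorem theorem1:
  fixes N k d j :: nat
  assumes "N > k" and "k \<ge> 1" and "d \<ge> 1"
  shows "w_number N k d j / of_nat k =
    of_real ((deriv ^^ j)
               (\<lambda>e::real. (\<Prod>r=1..k*d. real r + real k * e) / (\<Prod>r=1..d. (real r + e) ^ N)) 0
             / fact j)"
  proof -
  interpret wsetup N k d j using assms by unfold_locales auto
  show ?thesis by (rule final_local)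
qed

end
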